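(* Let $(X,d)$ be a compact metric space and $f\colon X\to X$ a continuous map that is c-expansive or equicontinuous. If $f$ has the shadowing property, then $f$ has the limit shadowing property.
   Context: For a continuous surjection $f$, let $X_f=\{(x_i)_{i\in\mathbb{Z}}\in X^{\mathbb{Z}}: f(x_i)=x_{i+1}\ \forall i\}$; $f$ is c-expansive if there is $e>0$ such that for $(x_i),(y_i)\in X_f$, $d(x_i,y_i)\le e$ for all $i\in\mathbb{Z}$ implies $(x_i)=(y_i)$. $f$ is equicontinuous if for every $\epsilon>0$ there is $\delta>0$ such that $d(x,y)\le\delta$ implies $\sup_{n\ge0}d(f^n(x),f^n(y))\le\epsilon$. Shadowing property: for every $\epsilon>0$ there is $\delta>0$ such that every sequence $(x_i)_{i\ge0}$ with $d(f(x_i),x_{i+1})\le\delta$ for all $i$ admits $x\in X$ with $d(x_i,f^i(x))\le\epsilon$ for all $i$. Limit shadowing property: every sequence $(x_i)_{i\ge0}$ with $\lim_i d(f(x_i),x_{i+1})=0$ admits $y\in X$ with $\lim_i d(x_i,f^i(y))=0$. *)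

theory Defs
  imports "HOL-Analysis.Analysis"
begin

definition orbit_space :: "('a \<Rightarrow> 'a) \<Rightarrow> (int \<Rightarrow> 'a) set" where
  "orbit_space f = {x. \<forall>i. f (x i) = x (i + 1)}"

definition c_expansive :: "('a::metric_space \<Rightarrow> 'a) \<Rightarrow> bool" where
  "c_expansive f \<longleftrightarrow> (\<exists>e>0. \<forall>x\<in>orbit_space f. \<forall>y\<in>orbit_space f.
      (\<forall>i. dist (x i) (y i) \<le> e) \<longrightarrow> x = y)"

definition equicontinuous_map :: "('a::metric_space \<Rightarrow> 'a) \<Rightarrow> bool" where
  "equicontinuous_map f \<longleftrightarrow> (\<forall>\<epsilon>>0. \<exists>\<delta>>0. \<forall>x y. dist x y \<le> \<delta> \<longrightarrow>
      (SUP n. dist ((f ^^ n) x) ((f ^^ n) y)) \<le> \<epsilon>)"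

definition shadowing :: "('a::metric_space \<Rightarrow> 'a) \<Rightarrow> bool" where
  "shadowing f \<longleftrightarrow> (\<forall>\<epsilon>>0. \<exists>\<delta>>0. \<forall>xs :: nat \<Rightarrow> 'a.
      (\<forall>i. dist (f (xs i)) (xs (Suc i)) \<le> \<delta>) \<longrightarrow>
      (\<exists>x. \<forall>i. dist (xs i) ((f ^^ i) x) \<le> \<epsilon>))"

definition limit_shadowing :: "('a::metric_space \<Rightarrow> 'a) \<Rightarrow> bool" where
  "limit_shadowing f \<longleftrightarrow> (\<forall>xs :: nat \<Rightarrow> 'a.
      (\<lambda>i. dist (f (xs i)) (xs (Suc i))) \<longlonglongrightarrow> 0 \<longrightarrow>
      (\<exists>y. (\<lambda>i. dist (xs i) ((f ^^ i) y)) \<longlonglongrightarrow> 0))"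

end

theory Submission
  imports Defs
begin

lemma compact_fun_UNIV:
  assumes "compact (UNIV::'b::topological_space set)"
  shows "compact (UNIV :: ('i \<Rightarrow> 'b) set)"
proof -
  have "compact_space (euclidean::'b topology)"
    using assms by (simp add: compact_space_def)
  then have "compact_space (product_topology (\<lambda>i::'i. euclidean::'b topology) UNIV)"
    by (simp add: compact_space_product_topology)
  then show ?thesis
    by (simp add: euclidean_product_topology compact_space_def)
qed

lemma continuous_on_funpow:
  fixes f :: "'a::topological_space \<Rightarrow> 'a"
  assumes "continuous_on UNIV f"
  shows "continuous_on UNIV (f ^^ n)"
proof (induction n)
  case 0
  have "(f ^^ 0) = id" by auto
  then show ?case by (simp add: continuous_on_id')
next
  case (Suc n)
  have "continuous_on (range (f ^^ n)) f" using continuous_on_subset[OF assms] by blast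
  then have "continuous_on UNIV (f \<circ> (f ^^ n))" by (rule continuous_on_compose[OF Suc.IH])
  then show ?case by simp
qed

lemma lambda_lemma:
  fixes f :: "'a::metric_space \<Rightarrow> 'a"
  assumes cpt: "compact (UNIV :: 'a set)" and cont: "continuous_on UNIV f" and d: "d > 0"
  shows "\<exists>n. \<forall>x. \<exists>q. (\<forall>m. q \<in> range (f ^^ m)) \<and> dist ((f ^^ n) x) q < d"
proof (rule ccontr)
  assume "\<not> ?thesis"
  then have "\<forall>n. \<exists>x. \<forall>q. (\<forall>m. q \<in> range (f ^^ m)) \<longrightarrow> dist ((f ^^ n) x) q \<ge> d"
    unfolding not_less[symmetric] by blast
  then obtain X where X: "\<And>n q. (\<forall>m. q \<in> range (f ^^ m)) \<Longrightarrow> dist ((f ^^ n) (X n)) q \<ge> d"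
    by metis
  define p where "p n = (f ^^ n) (X n)" for n
  have "seq_compact (UNIV :: 'a set)" using cpt compact_imp_seq_compact by blast
  then obtain s q where s: "strict_mono s" and lim: "(p \<circ> s) \<longlonglongrightarrow> q"
    unfolding seq_compact_def by blast
  have qin: "q \<in> range (f ^^ m)" for m
  proof -
    have cl: "closed (range (f ^^ m))"
      by (intro compact_imp_closed compact_continuous_image continuous_on_funpow cont cpt)
    have L: "(\<lambda>k. (p \<circ> s) (k + m)) \<longlonglongrightarrow> q"
      using lim by (rule LIMSEQ_ignore_initial_segment)
    moreover have rk: "(p \<circ> s) (k + m) \<in> range (f ^^ m)" for k
    proof -
      have "s (k + m) \<ge> k + m" using s seq_suble by blast
      then have "s (k+m) = m + (s (k+m) - m)" by simp
      then have "(f ^^ s (k+m)) = (f ^^ m) \<circ> (f ^^ (s (k+m) - m))"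
        using funpow_add[of m "s (k+m) - m" f] by simp
      then have "(f ^^ s (k+m)) (X (s (k+m))) = (f ^^ m) ((f ^^ (s (k+m) - m)) (X (s (k+m))))"
        by simp
      then show ?thesis by (simp add: p_def)
    qed
    show ?thesis using closed_sequentially[OF cl, of "\<lambda>k. (p \<circ> s) (k + m)" q] rk L by simp
  qed
  have "\<forall>\<^sub>F k in sequentially. dist ((p \<circ> s) k) q < d"
    using lim d by (simp add: tendsto_iff)
  then obtain N where "\<forall>k\<ge>N. dist ((p \<circ> s) k) q < d" unfolding eventually_sequentially by blast
  then obtain k where "dist ((p \<circ> s) k) q < d" by blast
  moreover have "dist ((p \<circ> s) k) q \<ge> d" using X qin by (simp add: p_def)
  ultimately show False by simp
qed

lemma chain_lemma:
  fixes f :: "'a::metric_space \<Rightarrow> 'a"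
  assumes uc: "uniformly_continuous_on UNIV f"
    and xs: "(\<lambda>i. dist (f (xs i)) (xs (Suc i))) \<longlonglongrightarrow> 0"
  shows "\<forall>g>0. \<forall>\<^sub>F i in sequentially. \<exists>a. dist (xs i) ((f ^^ n) a) < g"
proof (induction n)
  case 0
  have "\<forall>g>0. \<forall>i. \<exists>a. dist (xs i) ((f ^^ 0) a) < g"
  proof (intro allI impI)
    fix g :: real and i assume "g > 0"
    then show "\<exists>a. dist (xs i) ((f ^^ 0) a) < g" by (intro exI[of _ "xs i"]) simp
  qed
  then show ?case by (auto intro: always_eventually)
next
  case (Suc n)
  show ?case
  proof (intro allI impI)
    fix g :: real assume g: "g > 0"
    obtain dd where dd: "dd > 0" "\<And>x x'. dist x' x < dd \<Longrightarrow> dist (f x') (f x) < g/2"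
    proof -
      have "g/2 > 0" using g by simp
      then show ?thesis using uc unfolding uniformly_continuous_on_def using that by blast
    qed
    have e1: "\<forall>\<^sub>F i in sequentially. \<exists>a. dist (xs i) ((f ^^ n) a) < dd"
      using Suc dd by blast
    have e2: "\<forall>\<^sub>F i in sequentially. dist (f (xs i)) (xs (Suc i)) < g/2"
    proof -
      have "g/2 > 0" using g by simp
      from xs[unfolded tendsto_iff, rule_format, OF this] show ?thesis by simp
    qed
    have "\<forall>\<^sub>F i in sequentially. \<exists>a. dist (xs (Suc i)) ((f ^^ Suc n) a) < g"
      using e1 e2
    proof eventually_elim
      case (elim i)
      then obtain a where a: "dist (xs i) ((f ^^ n) a) < dd" by blast
      have "dist (f (xs i)) (f ((f ^^ n) a)) < g/2" using dd(2)[OF a] .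
      then have "dist (xs (Suc i)) ((f ^^ Suc n) a) < g"
        using elim(2) dist_triangle[of "xs (Suc i)" "(f ^^ Suc n) a" "f (xs i)"]
        by (simp add: dist_commute)
      then show ?case by blast
    qed
    then show "\<forall>\<^sub>F i in sequentially. \<exists>a. dist (xs i) ((f ^^ Suc n) a) < g"
      using eventually_sequentially_Suc[of "\<lambda>i. \<exists>a. dist (xs i) ((f ^^ Suc n) a) < g"] by blast
  qed
qed

lemma shadow_tail:
  fixes f :: "'a::metric_space \<Rightarrow> 'a"
  assumes cpt: "compact (UNIV :: 'a set)" and cont: "continuous_on UNIV f"
    and sh: "shadowing f" and xs: "(\<lambda>i. dist (f (xs i)) (xs (Suc i))) \<longlonglongrightarrow> 0"
    and eps: "\<epsilon> > 0"
  shows "\<exists>N y. \<forall>i\<ge>N. dist (xs i) ((f ^^ i) y) \<le> \<epsilon>"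
proof -
  obtain \<delta> where \<delta>: "\<delta> > 0" "\<And>zs. (\<forall>i. dist (f (zs i)) (zs (Suc i)) \<le> \<delta>) \<Longrightarrow> \<exists>x. \<forall>i. dist (zs i) ((f ^^ i) x) \<le> \<epsilon>"
    using sh eps unfolding shadowing_def by blast
  have uc: "uniformly_continuous_on UNIV f" using compact_uniformly_continuous cont cpt by blast
  have d2: "\<delta>/2 > 0" using \<delta> by simp
  obtain n where n: "\<And>x. \<exists>q. (\<forall>m. q \<in> range (f ^^ m)) \<and> dist ((f ^^ n) x) q < \<delta>/2"
    using lambda_lemma[OF cpt cont d2] by blast
  have e1: "\<forall>\<^sub>F i in sequentially. \<exists>a. dist (xs i) ((f ^^ n) a) < \<delta>/2"
    using chain_lemma[OF uc xs] d2 by blast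
  have e2: "\<forall>\<^sub>F i in sequentially. dist (f (xs i)) (xs (Suc i)) < \<delta>"
    using xs[unfolded tendsto_iff, rule_format, OF \<delta>(1)] by simp
  obtain N where N: "\<And>i. i \<ge> N \<Longrightarrow> (\<exists>a. dist (xs i) ((f ^^ n) a) < \<delta>/2) \<and> dist (f (xs i)) (xs (Suc i)) < \<delta>"
    using eventually_conj[OF e1 e2] unfolding eventually_sequentially by blast
  obtain a where a: "dist (xs N) ((f ^^ n) a) < \<delta>/2" using N by blast
  obtain q where q: "\<forall>m. q \<in> range (f ^^ m)" "dist ((f ^^ n) a) q < \<delta>/2" using n by blast
  obtain p where p: "q = (f ^^ N) p" using q(1) by blast
  define zs where "zs j = (if j < N then (f ^^ j) p else xs j)" for j
  have "\<forall>j. dist (f (zs j)) (zs (Suc j)) \<le> \<delta>"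
  proof
    fix j
    consider "Suc j < N" | "Suc j = N" | "j \<ge> N" by linarith
    then show "dist (f (zs j)) (zs (Suc j)) \<le> \<delta>"
    proof cases
      case 1 then show ?thesis using \<delta> by (simp add: zs_def)
    next
      case 2
      then have "f (zs j) = q" by (auto simp add: zs_def p)
      moreover have "zs (Suc j) = xs N" using 2 by (simp add: zs_def)
      ultimately show ?thesis using a q(2) dist_triangle[of q "xs N" "(f ^^ n) a"]
        by (simp add: dist_commute)
    next
      case 3 then show ?thesis using N[of j] by (simp add: zs_def)
    qed
  qed
  then obtain y where y: "\<forall>i. dist (zs i) ((f ^^ i) y) \<le> \<epsilon>" using \<delta>(2) by blast
  have "\<forall>i\<ge>N. dist (xs i) ((f ^^ i) y) \<le> \<epsilon>"
  proof (intro allI impI)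
    fix i assume "N \<le> i"
    then show "dist (xs i) ((f ^^ i) y) \<le> \<epsilon>" using y[rule_format, of i] by (simp add: zs_def)
  qed
  then show ?thesis by blast
qed

lemma orbit_limit:
  fixes f :: "'a::metric_space \<Rightarrow> 'a" and R :: "nat \<Rightarrow> int"
  assumes cont: "continuous_on UNIV f"
    and lim: "\<And>j. (\<lambda>k. (f ^^ nat (R k + j)) c) \<longlonglongrightarrow> w j"
    and ev: "\<And>j. \<forall>\<^sub>F k in sequentially. R k + j \<ge> 0"
  shows "w \<in> orbit_space f"
  unfolding orbit_space_def
proof (intro CollectI allI)
  fix j
  have "\<forall>x\<in>UNIV. isCont f x" using cont continuous_on_eq_continuous_at[OF open_UNIV] by blast
  then have ic: "isCont f (w j)" by simp
  have "(\<lambda>k. f ((f ^^ nat (R k + j)) c)) \<longlonglongrightarrow> f (w j)"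
    using isCont_tendsto_compose[OF ic lim] .
  moreover have "\<forall>\<^sub>F k in sequentially. f ((f ^^ nat (R k + j)) c) = (f ^^ nat (R k + (j+1))) c"
    using ev[of j]
  proof eventually_elim
    case (elim k)
    then have "nat (R k + (j+1)) = Suc (nat (R k + j))" by linarith
    then show ?case by simp
  qed
  ultimately have "(\<lambda>k. (f ^^ nat (R k + (j+1))) c) \<longlonglongrightarrow> f (w j)"
    using Lim_transform_eventually by fastforce
  with lim[of "j+1"] show "f (w j) = w (j+1)" using LIMSEQ_unique by blast
qed

lemma expansive_asym:
  fixes f :: "'a::metric_space \<Rightarrow> 'a"
  assumes cpt: "compact (UNIV :: 'a set)" and cont: "continuous_on UNIV f"
    and exp: "\<forall>x\<in>orbit_space f. \<forall>y\<in>orbit_space f. (\<forall>i. dist (x i) (y i) \<le> e) \<longrightarrow> x = y"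
    and close: "\<And>n. dist ((f ^^ n) a) ((f ^^ n) b) \<le> e"
  shows "(\<lambda>n. dist ((f ^^ n) a) ((f ^^ n) b)) \<longlonglongrightarrow> 0"
proof (rule ccontr)
  assume nt: "\<not> ?thesis"
  have "\<exists>\<gamma>>0. \<forall>N. \<exists>n\<ge>N. dist ((f ^^ n) a) ((f ^^ n) b) \<ge> \<gamma>"
  proof (rule ccontr)
    assume "\<not> (\<exists>\<gamma>>0. \<forall>N. \<exists>n\<ge>N. dist ((f ^^ n) a) ((f ^^ n) b) \<ge> \<gamma>)"
    then have h: "\<forall>\<gamma>>0. \<exists>N. \<forall>n\<ge>N. dist ((f ^^ n) a) ((f ^^ n) b) < \<gamma>"
      unfolding not_le[symmetric] by blast
    have "(\<lambda>n. dist ((f ^^ n) a) ((f ^^ n) b)) \<longlonglongrightarrow> 0"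
    proof (rule LIMSEQ_I)
      fix r :: real assume "r > 0"
      then obtain N where "\<forall>n\<ge>N. dist ((f ^^ n) a) ((f ^^ n) b) < r" using h by blast
      then show "\<exists>no. \<forall>n\<ge>no. norm (dist ((f ^^ n) a) ((f ^^ n) b) - 0) < r" by auto
    qed
    with nt show False by blast
  qed
  then obtain \<gamma> where \<gamma>: "\<gamma> > 0" "\<And>N. \<exists>n\<ge>N. dist ((f ^^ n) a) ((f ^^ n) b) \<ge> \<gamma>" by blast
  then obtain r where r: "\<And>N. r N \<ge> N" "\<And>N. dist ((f ^^ r N) a) ((f ^^ r N) b) \<ge> \<gamma>" by metis
  define U where "U k = (\<lambda>j::int. ((f ^^ nat (int (r k) + j)) a, (f ^^ nat (int (r k) + j)) b))" for k
  have "compact (UNIV \<times> UNIV :: ('a \<times> 'a) set)" using cpt compact_Times by blast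
  then have "compact (UNIV :: ('a \<times> 'a) set)" by simp
  then have "compact (UNIV :: (int \<Rightarrow> 'a \<times> 'a) set)" by (rule compact_fun_UNIV)
  then have "seq_compact (UNIV :: (int \<Rightarrow> 'a \<times> 'a) set)" by (rule compact_imp_seq_compact)
  then obtain l s where "l \<in> UNIV" and s: "strict_mono s" and lim: "(U \<circ> s) \<longlonglongrightarrow> l"
    by (rule seq_compactE[where f=U]) simp
  have limj: "(\<lambda>k. U (s k) j) \<longlonglongrightarrow> l j" for j
  proof -
    have "continuous_on UNIV (\<lambda>x::int \<Rightarrow> 'a \<times> 'a. x j)" by simp
    then have "\<forall>x\<in>UNIV. isCont (\<lambda>x::int \<Rightarrow> 'a \<times> 'a. x j) x"
      using continuous_on_eq_continuous_at[OF open_UNIV] by blast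
    then have "isCont (\<lambda>x::int \<Rightarrow> 'a \<times> 'a. x j) l" by simp
    from isCont_tendsto_compose[OF this lim] show ?thesis by simp
  qed
  define u where "u j = fst (l j)" for j
  define v where "v j = snd (l j)" for j
  have limu: "(\<lambda>k. (f ^^ nat (int (r (s k)) + j)) a) \<longlonglongrightarrow> u j" for j
    using tendsto_fst[OF limj[of j]] by (simp add: U_def u_def)
  have limv: "(\<lambda>k. (f ^^ nat (int (r (s k)) + j)) b) \<longlonglongrightarrow> v j" for j
    using tendsto_snd[OF limj[of j]] by (simp add: U_def v_def)
  have ev: "\<forall>\<^sub>F k in sequentially. int (r (s k)) + j \<ge> 0" for j
    unfolding eventually_sequentially
  proof (intro exI[of _ "nat (- j)"] allI impI)
    fix k assume k: "nat (- j) \<le> k"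
    have "s k \<ge> k" using s seq_suble by blast
    then have "r (s k) \<ge> k" using r(1)[of "s k"] by linarith
    then show "int (r (s k)) + j \<ge> 0" using k by linarith
  qed
  have ou: "u \<in> orbit_space f" by (rule orbit_limit[OF cont limu ev])
  have ov: "v \<in> orbit_space f" by (rule orbit_limit[OF cont limv ev])
  have "dist (u j) (v j) \<le> e" for j
    using tendsto_dist[OF limu[of j] limv[of j]] close
    by (intro LIMSEQ_le_const2[where X="\<lambda>k. dist ((f ^^ nat (int (r (s k)) + j)) a) ((f ^^ nat (int (r (s k)) + j)) b)"]) auto
  then have "u = v" using exp ou ov by blast
  moreover have "\<gamma> \<le> dist (u 0) (v 0)"
    using tendsto_dist[OF limu[of 0] limv[of 0]] r(2)
    by (intro LIMSEQ_le_const[where X="\<lambda>k. dist ((f ^^ nat (int (r (s k)) + 0)) a) ((f ^^ nat (int (r (s k)) + 0)) b)"]) auto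
  ultimately show False using \<gamma>(1) by simp
qed

theorem proposition1p1:
  fixes f :: "'a::metric_space \<Rightarrow> 'a"
  assumes "compact (UNIV :: 'a set)"
    and "continuous_on UNIV f"
    and "c_expansive f \<or> equicontinuous_map f"
    and "shadowing f"
  shows "limit_shadowing f"
  unfolding limit_shadowing_def
proof (intro allI impI)
  note cpt = assms(1) and cont = assms(2)
  fix xs :: "nat \<Rightarrow> 'a"
  assume xs: "(\<lambda>i. dist (f (xs i)) (xs (Suc i))) \<longlonglongrightarrow> 0"
  have tail: "\<And>\<epsilon>. \<epsilon> > 0 \<Longrightarrow> \<exists>N y. \<forall>i\<ge>N. dist (xs i) ((f ^^ i) y) \<le> \<epsilon>"
    using shadow_tail[OF assms(1,2,4) xs] by blast
  from assms(3) show "\<exists>y. (\<lambda>i. dist (xs i) ((f ^^ i) y)) \<longlonglongrightarrow> 0"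
  proof
    assume "c_expansive f"
    then obtain e where e: "e > 0"
      and exp: "\<forall>x\<in>orbit_space f. \<forall>y\<in>orbit_space f. (\<forall>i. dist (x i) (y i) \<le> e) \<longrightarrow> x = y"
      unfolding c_expansive_def by blast
    have "e/2 > 0" using e by simp
    then obtain N y where Ny: "\<forall>i\<ge>N. dist (xs i) ((f ^^ i) y) \<le> e/2" using tail by blast
    have "(\<lambda>i. dist (xs i) ((f ^^ i) y)) \<longlonglongrightarrow> 0"
    proof (rule LIMSEQ_I)
      fix \<eta> :: real assume \<eta>: "\<eta> > 0"
      define \<eta>' where "\<eta>' = min \<eta> e / 4"
      have \<eta>': "\<eta>' > 0" "\<eta>' \<le> e/2" "\<eta>' \<le> \<eta>/4" using \<eta> e by (auto simp: \<eta>'_def)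
      obtain N' y' where Ny': "\<forall>i\<ge>N'. dist (xs i) ((f ^^ i) y') \<le> \<eta>'" using tail \<eta>'(1) by blast
      define M where "M = max N N'"
      have fp: "(f ^^ n) ((f ^^ M) z) = (f ^^ (n + M)) z" for n z
        by (simp add: funpow_add)
      have cl: "dist ((f ^^ n) ((f ^^ M) y)) ((f ^^ n) ((f ^^ M) y')) \<le> e" for n
      proof -
        have "dist ((f ^^ (n+M)) y) (xs (n+M)) \<le> e/2" using Ny M_def by (simp add: dist_commute)
        moreover have "dist (xs (n+M)) ((f ^^ (n+M)) y') \<le> e/2" proof -
          have "dist (xs (n+M)) ((f ^^ (n+M)) y') \<le> \<eta>'" using Ny' M_def by simp
          then show ?thesis using \<eta>'(2) by linarith
        qed
        ultimately show ?thesis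
          using dist_triangle[of "(f ^^ (n+M)) y" "(f ^^ (n+M)) y'" "xs (n+M)"] by (simp add: fp)
      qed
      have "(\<lambda>n. dist ((f ^^ n) ((f ^^ M) y)) ((f ^^ n) ((f ^^ M) y'))) \<longlonglongrightarrow> 0"
        by (rule expansive_asym[OF cpt cont exp cl])
      moreover have "\<eta>/2 > 0" using \<eta> by simp
      ultimately obtain n0 where n0: "\<forall>n\<ge>n0. norm (dist ((f ^^ n) ((f ^^ M) y)) ((f ^^ n) ((f ^^ M) y')) - 0) < \<eta>/2"
        using LIMSEQ_D by blast
      show "\<exists>no. \<forall>i\<ge>no. norm (dist (xs i) ((f ^^ i) y) - 0) < \<eta>"
      proof (intro exI[of _ "n0 + M"] allI impI)
        fix i assume i: "n0 + M \<le> i"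
        have "i = (i - M) + M" using i by simp
        then have eqs: "(f ^^ (i - M)) ((f ^^ M) z) = (f ^^ i) z" for z using fp[of "i-M" z] by simp
        have "dist ((f ^^ i) y) ((f ^^ i) y') < \<eta>/2" using n0[rule_format, of "i - M"] i by (simp add: eqs)
        moreover have "dist (xs i) ((f ^^ i) y') \<le> \<eta>'" using Ny' i M_def by auto
        ultimately have "dist (xs i) ((f ^^ i) y) < \<eta>"
          using dist_triangle[of "xs i" "(f ^^ i) y" "(f ^^ i) y'"] \<eta>' by (simp add: dist_commute)
        then show "norm (dist (xs i) ((f ^^ i) y) - 0) < \<eta>" by simp
      qed
    qed
    then show ?thesis by blast
  next
    assume "equicontinuous_map f"
    have "bounded (UNIV :: 'a set)" using cpt compact_imp_bounded by blast
    then obtain c :: 'a and B where cB: "\<And>x. dist c x \<le> B" unfolding bounded_def by (metis UNIV_I)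
    have B: "dist x z \<le> 2 * B" for x z :: 'a
      using cB[of x] cB[of z] dist_triangle[of x z c] by (simp add: dist_commute)
    have eq': "\<exists>\<delta>>0. \<forall>x z. dist x z \<le> \<delta> \<longrightarrow> (\<forall>n. dist ((f ^^ n) x) ((f ^^ n) z) \<le> \<epsilon>)" if epsp: "\<epsilon> > 0" for \<epsilon>
    proof -
      obtain \<delta> where \<delta>: "\<delta> > 0" "\<forall>x y. dist x y \<le> \<delta> \<longrightarrow> (SUP n. dist ((f ^^ n) x) ((f ^^ n) y)) \<le> \<epsilon>"
        using \<open>equicontinuous_map f\<close> epsp unfolding equicontinuous_map_def by blast
      have "\<forall>x z. dist x z \<le> \<delta> \<longrightarrow> (\<forall>n. dist ((f ^^ n) x) ((f ^^ n) z) \<le> \<epsilon>)"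
      proof (intro allI impI)
        fix x z :: 'a and n assume "dist x z \<le> \<delta>"
        then have "(SUP n. dist ((f ^^ n) x) ((f ^^ n) z)) \<le> \<epsilon>" using \<delta> by blast
        moreover have "dist ((f ^^ n) x) ((f ^^ n) z) \<le> (SUP n. dist ((f ^^ n) x) ((f ^^ n) z))"
          by (rule cSUP_upper) (auto intro: bdd_aboveI2[where M="2*B"] B)
        ultimately show "dist ((f ^^ n) x) ((f ^^ n) z) \<le> \<epsilon>" by linarith
      qed
      then show ?thesis using \<delta>(1) by blast
    qed
    have "\<forall>k. \<exists>N y. \<forall>i\<ge>N. dist (xs i) ((f ^^ i) y) \<le> 1 / real (Suc k)"
      using tail by simp
    then obtain NN yy where Nyy: "\<And>k i. i \<ge> NN k \<Longrightarrow> dist (xs i) ((f ^^ i) (yy k)) \<le> 1 / real (Suc k)"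
      by metis
    have "seq_compact (UNIV :: 'a set)" using cpt compact_imp_seq_compact by blast
    then obtain s y where s: "strict_mono s" and lim: "(yy \<circ> s) \<longlonglongrightarrow> y"
      unfolding seq_compact_def by blast
    have "(\<lambda>i. dist (xs i) ((f ^^ i) y)) \<longlonglongrightarrow> 0"
    proof (rule LIMSEQ_I)
      fix \<eta> :: real assume \<eta>: "\<eta> > 0"
      then have "\<eta>/3 > 0" by simp
      then obtain \<delta> where \<delta>: "\<delta> > 0" "\<And>x z n. dist x z \<le> \<delta> \<Longrightarrow> dist ((f ^^ n) x) ((f ^^ n) z) \<le> \<eta>/3"
        using eq' by blast
      obtain n0 :: nat where n0: "n0 > 0" "inverse (real n0) < \<eta>/3"
        using ex_inverse_of_nat_less[OF \<open>\<eta>/3 > 0\<close>] by blast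
      define k0 where "k0 = n0 - 1"
      have "Suc k0 = n0" using n0(1) by (simp add: k0_def)
      then have k0: "inverse (real (Suc k0)) < \<eta>/3" using n0(2) by simp
      obtain K1 where K1: "\<forall>k\<ge>K1. dist ((yy \<circ> s) k) y < \<delta>"
        using lim[unfolded tendsto_iff, rule_format, OF \<delta>(1)] unfolding eventually_sequentially by blast
      define K where "K = max K1 k0"
      have "K \<ge> K1" using K_def by simp
      then have "dist ((yy \<circ> s) K) y < \<delta>" using K1 by blast
      then have dK: "dist (yy (s K)) y \<le> \<delta>" by simp
      have "s K \<ge> K" using s seq_suble by blast
      then have "s K \<ge> k0" using K_def by simp
      then have "1 / real (Suc (s K)) \<le> inverse (real (Suc k0))"
        by (simp add: divide_simps)
      then have small: "1 / real (Suc (s K)) < \<eta>/3" using k0 by linarith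
      show "\<exists>no. \<forall>i\<ge>no. norm (dist (xs i) ((f ^^ i) y) - 0) < \<eta>"
      proof (intro exI[of _ "NN (s K)"] allI impI)
        fix i assume i: "NN (s K) \<le> i"
        have "dist (xs i) ((f ^^ i) (yy (s K))) \<le> 1 / real (Suc (s K))" using Nyy i by blast
        moreover have "dist ((f ^^ i) (yy (s K))) ((f ^^ i) y) \<le> \<eta>/3" using \<delta>(2) dK by blast
        ultimately have "dist (xs i) ((f ^^ i) y) < \<eta>"
          using dist_triangle[of "xs i" "(f ^^ i) y" "(f ^^ i) (yy (s K))"] small \<eta> by linarith
        then show "norm (dist (xs i) ((f ^^ i) y) - 0) < \<eta>" by simp
      qed
    qed
    then show ?thesis by blast
  qed
qed

end
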